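(* Let $\theta\in\mathbb{R}\setminus\mathbb{Q}$, $p_1,\ldots,p_k\in\mathbb{Z}\setminus\{0\}$ and $\xi_1,\ldots,\xi_k\in\mathbb{Q}\cap[0,1)$, and consider the system $\hat\theta_j=p_j\theta+\xi_j$, $1\le j\le k$. If there exist $1\le j'<j''\le k$ with $p_{j'}p_{j''}=-1$ and $\{\xi_{j'}+\xi_{j''}\}=0$, then this system is equivalent to the system $\hat\theta_j=p_j\theta+\xi_j$, $j\in\{1,\ldots,k\}\setminus\{j',j''\}$, i.e. the two systems have the same effective difference number.
   Context: For a system $\hat\theta_i=q_i\theta+\zeta_i$, $i\in I$ ($I$ finite), with $\theta$ irrational, $q_i\in\mathbb{Z}\setminus\{0\}$, $\zeta_i\in\mathbb{Q}\cap[0,1)$, and for $\eta\in\mathbb{Q}$, set $\eta(\zeta_i)=\{\zeta_i-q_i\eta\}$ (fractional part), $k_0^+(\eta)=\#\{i:\eta(\zeta_i)=0,q_i>0\}$, $k_0^-(\eta)=\#\{i:\eta(\zeta_i)=0,q_i<0\}$. The effective difference number of the system is $\max\{|k_0^+(\eta)-k_0^-(\eta)|:\eta\in\mathbb{Q}\}$ (with $k_0^\pm(\eta)=0$ for the empty system). Two such systems are called equivalent if their effective difference numbers coincide. *)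

theory Defs
  imports Complex_Main
begin

text \<open>A system theta_i = q_i theta + zeta_i, i in I, is represented by the finite
index set I, the integer coefficients q and the rational shifts zeta.
eta(zeta_i) = frac(zeta_i - q_i eta).\<close>

definition k0_plus :: "'i set \<Rightarrow> ('i \<Rightarrow> int) \<Rightarrow> ('i \<Rightarrow> rat) \<Rightarrow> rat \<Rightarrow> nat" where
  "k0_plus I q \<zeta> \<eta> = card {i \<in> I. frac (\<zeta> i - of_int (q i) * \<eta>) = 0 \<and> q i > 0}"

definition k0_minus :: "'i set \<Rightarrow> ('i \<Rightarrow> int) \<Rightarrow> ('i \<Rightarrow> rat) \<Rightarrow> rat \<Rightarrow> nat" where
  "k0_minus I q \<zeta> \<eta> = card {i \<in> I. frac (\<zeta> i - of_int (q i) * \<eta>) = 0 \<and> q i < 0}"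

definition eff_diff_number :: "'i set \<Rightarrow> ('i \<Rightarrow> int) \<Rightarrow> ('i \<Rightarrow> rat) \<Rightarrow> nat" where
  "eff_diff_number I q \<zeta> =
     Max ((\<lambda>\<eta>. nat \<bar>int (k0_plus I q \<zeta> \<eta>) - int (k0_minus I q \<zeta> \<eta>)\<bar>) ` UNIV)"

end

theory Submission
  imports Defs
begin

lemma key:
  fixes p :: "nat \<Rightarrow> int" and \<xi> :: "nat \<Rightarrow> rat" and j' j'' :: nat and I :: "nat set"
  assumes fin: "finite I" and sub: "{j',j''} \<subseteq> I" and ne: "j' \<noteq> j''"
    and pp: "p j' * p j'' = -1"
    and fr: "frac (\<xi> j' + \<xi> j'') = 0"
  shows "int (k0_plus I p \<xi> \<eta>) - int (k0_minus I p \<xi> \<eta>)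
       = int (k0_plus (I - {j',j''}) p \<xi> \<eta>) - int (k0_minus (I - {j',j''}) p \<xi> \<eta>)"
proof -
  define Z where "Z i \<longleftrightarrow> frac (\<xi> i - of_int (p i) * \<eta>) = 0" for i
  have pj: "(p j' = 1 \<and> p j'' = -1) \<or> (p j' = -1 \<and> p j'' = 1)"
  proof -
    have "p j' * (- p j'') = 1" using pp by simp
    hence "p j' = 1 \<and> - p j'' = 1 \<or> p j' = -1 \<and> - p j'' = -1" using zmult_eq_1_iff by blast
    thus ?thesis by auto
  qed
  have s: "\<xi> j' + \<xi> j'' \<in> \<int>" using fr frac_eq_0_iff by blast
  have "\<xi> j'' - of_int (p j'') * \<eta> = (\<xi> j' + \<xi> j'') - (\<xi> j' - of_int (p j') * \<eta>)"
    using pj by auto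
  hence Zeq: "Z j'' \<longleftrightarrow> Z j'"
    unfolding Z_def frac_eq_0_iff using s
    by (metis Ints_diff add_diff_cancel_left' diff_add_cancel)
  define Pf where "Pf = {i \<in> I. Z i \<and> p i > 0}"
  define Mf where "Mf = {i \<in> I. Z i \<and> p i < 0}"
  define Pr where "Pr = {i \<in> I - {j',j''}. Z i \<and> p i > 0}"
  define Mr where "Mr = {i \<in> I - {j',j''}. Z i \<and> p i < 0}"
  define P2 where "P2 = {i \<in> {j',j''}. Z i \<and> p i > 0}"
  define M2 where "M2 = {i \<in> {j',j''}. Z i \<and> p i < 0}"
  have "Pf = Pr \<union> P2" "Mf = Mr \<union> M2" using sub unfolding Pf_def Pr_def P2_def Mf_def Mr_def M2_def by auto
  hence cP: "card Pf = card Pr + card P2" and cM: "card Mf = card Mr + card M2"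
    using fin unfolding Pr_def P2_def Mr_def M2_def
    by (auto intro!: card_Un_disjoint)
  have "card P2 = card M2"
  proof (cases "Z j'")
    case True
    from pj show ?thesis
    proof
      assume h: "p j' = 1 \<and> p j'' = -1"
      hence "P2 = {j'}" "M2 = {j''}" using True Zeq unfolding P2_def M2_def by auto
      thus ?thesis by simp
    next
      assume h: "p j' = -1 \<and> p j'' = 1"
      hence "P2 = {j''}" "M2 = {j'}" using True Zeq unfolding P2_def M2_def by auto
      thus ?thesis by simp
    qed
  next
    case False
    then have "P2 = {}" "M2 = {}" using Zeq unfolding P2_def M2_def by auto
    then show ?thesis by simp
  qed
  moreover have "k0_plus I p \<xi> \<eta> = card Pf" "k0_minus I p \<xi> \<eta> = card Mf"
    "k0_plus (I - {j',j''}) p \<xi> \<eta> = card Pr" "k0_minus (I - {j',j''}) p \<xi> \<eta> = card Mr"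
    unfolding k0_plus_def k0_minus_def Pf_def Mf_def Pr_def Mr_def Z_def by auto
  ultimately show ?thesis using cP cM by simp
qed

theorem lemma4p3:
  fixes \<theta> :: real and k :: nat and p :: "nat \<Rightarrow> int" and \<xi> :: "nat \<Rightarrow> rat"
    and j' j'' :: nat
  assumes "\<theta> \<notin> \<rat>"
    and "\<forall>j\<in>{1..k}. p j \<noteq> 0"
    and "\<forall>j\<in>{1..k}. 0 \<le> \<xi> j \<and> \<xi> j < 1"
    and "1 \<le> j'" and "j' < j''" and "j'' \<le> k"
    and "p j' * p j'' = -1"
    and "frac (\<xi> j' + \<xi> j'') = 0"
  shows "eff_diff_number {1..k} p \<xi> = eff_diff_number ({1..k} - {j', j''}) p \<xi>"
proof -
  have "\<And>\<eta>. int (k0_plus {1..k} p \<xi> \<eta>) - int (k0_minus {1..k} p \<xi> \<eta>)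
       = int (k0_plus ({1..k} - {j',j''}) p \<xi> \<eta>) - int (k0_minus ({1..k} - {j',j''}) p \<xi> \<eta>)"
    by (rule key) (use assms in auto)
  then show ?thesis unfolding eff_diff_number_def by simp
qed

end
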